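(* Assume $p_0=0$ and the offspring law is of type $(d,\mu)$. There are constants $A>0$ and $\theta\in(0,1)$ such that for all $n\ge1$, $1\le j\le n$, $h\ge0$ and $t\in J_j$, $$\big|f_n(e^{-h/c_n+it})\big|\le\begin{cases}A\,p_1^{\,n-j+1}&\text{in the Schröder case},\\ \theta^{(\mu^{n-j+1})}&\text{in all cases},\end{cases}$$ where $J_j:=\{t\in\mathbb R:\ c_j^{-1}\pi d^{-1}\le|t|\le c_{j-1}^{-1}\pi d^{-1}\}$.
   Context: $Z$ is a supercritical Galton–Watson process with $Z_0=1$ and non-degenerate offspring generating function $f(s)=\sum_{j\ge0}p_js^j$ (extended to the closed complex unit disc), mean $m=f'(1)\in(1,\infty)$; $f_n$ denotes the $n$-th iterate of $f$. Type $(d,\mu)$: $d$ is the gcd of $\{j-\ell:\ j\ne\ell,\ p_jp_\ell>0\}$ and $\mu$ the minimal $j$ with $p_j>0$. Schröder case: $p_0+p_1>0$. $(c_n)_{n\ge0}$ is a fixed sequence of positive constants with $c_0=1$, $c_n<c_{n+1}\le mc_n$, $c_n=m^nL(m^n)$ for some slowly varying $L$ ($c_n=m^n$ if $\mathbf EZ_1\log Z_1<\infty$), such that $c_n^{-1}Z_n\to W$ a.s. for a non-degenerate $W$ whose law on $(0,\infty)$ is absolutely continuous. *)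

theory Defs
  imports "HOL-Probability.Probability"
begin

definition gf :: "(nat \<Rightarrow> real) \<Rightarrow> complex \<Rightarrow> complex" where
  "gf p s = (\<Sum>j. complex_of_real (p j) * s ^ j)"

definition span_d :: "(nat \<Rightarrow> real) \<Rightarrow> nat" where
  "span_d p = Gcd {j - l | j l. l < j \<and> p j * p l > 0}"

definition min_mu :: "(nat \<Rightarrow> real) \<Rightarrow> nat" where
  "min_mu p = (LEAST j. p j > 0)"

text \<open>Galton--Watson process built from offspring variables xi n k
  (number of children of the k-th individual of generation n), Z_0 = 1.\<close>
fun GW :: "(nat \<Rightarrow> nat \<Rightarrow> 'a \<Rightarrow> nat) \<Rightarrow> nat \<Rightarrow> 'a \<Rightarrow> nat" where
  "GW \<xi> 0 \<omega> = 1"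
| "GW \<xi> (Suc n) \<omega> = (\<Sum>k<GW \<xi> n \<omega>. \<xi> n k \<omega>)"

definition slowly_varying :: "(real \<Rightarrow> real) \<Rightarrow> bool" where
  "slowly_varying L \<longleftrightarrow> L \<in> borel_measurable borel \<and> (\<forall>x>0. L x > 0) \<and>
     (\<forall>a>0. ((\<lambda>x. L (a * x) / L x) \<longlongrightarrow> 1) at_top)"

end

theory Submission
  imports Defs
begin

fun GWf :: "nat \<Rightarrow> (nat \<times> nat \<Rightarrow> nat) \<Rightarrow> nat" where
  "GWf 0 x = 1"
| "GWf (Suc n) x = (\<Sum>k<GWf n x. x (n, k))"

lemma GW_GWf: "GW \<xi> n \<omega> = GWf n (\<lambda>(i,k). \<xi> i k \<omega>)"
  by (induction n) auto

lemma GWf_restrict: "{(i,k). i<n} \<subseteq> K \<Longrightarrow> GWf n (restrict x K) = GWf n x"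
proof (induction n)
  case 0 then show ?case by simp
next
  case (Suc n)
  have "{(i,k). i<n} \<subseteq> {(i,k). i < Suc n}" by auto
  have sub: "{(i,k). i<n} \<subseteq> K" using Suc.prems by auto
  note IH = Suc.IH[OF sub]
  show ?case
    by (simp only: GWf.simps IH) (rule sum.cong; use Suc.prems in auto)
qed

lemma meas_sum_nat:
  fixes f :: "nat \<Rightarrow> 'a \<Rightarrow> nat"
  assumes "\<And>k. k \<in> A \<Longrightarrow> f k \<in> measurable M (count_space UNIV)"
  shows "(\<lambda>x. \<Sum>k\<in>A. f k x) \<in> measurable M (count_space UNIV)"
  using assms
proof (induction A rule: infinite_finite_induct)
  case (insert a A)
  have "(\<lambda>x. (f a x, \<Sum>k\<in>A. f k x)) \<in> measurable M (count_space UNIV \<Otimes>\<^sub>M count_space UNIV)"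
    using insert by (intro measurable_Pair) auto
  then have "(\<lambda>x. (f a x, \<Sum>k\<in>A. f k x)) \<in> measurable M (count_space UNIV)"
    by (simp add: pair_measure_countable)
  from measurable_compose[OF this measurable_count_space[of "\<lambda>(a,b). a + b"]]
  show ?case using insert by simp
qed auto

lemma GWf_meas: "{(i,k). i<n} \<subseteq> K \<Longrightarrow> GWf n \<in> measurable (PiM K (\<lambda>_. count_space UNIV)) (count_space UNIV)"
proof (induction n)
  case 0 then show ?case by simp
next
  case (Suc n)
  have sub: "{(i,k). i<n} \<subseteq> K" using Suc.prems by auto
  note IH = Suc.IH[OF sub]
  have "(\<lambda>x. (\<lambda>N x. \<Sum>k<N. x (n,k)) (GWf n x) x) \<in> measurable (PiM K (\<lambda>_. count_space UNIV)) (count_space UNIV)"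
  proof (rule measurable_compose_countable[OF _ IH])
    fix N :: nat
    show "(\<lambda>x. \<Sum>k<N. x (n, k)) \<in> measurable (PiM K (\<lambda>_. count_space (UNIV::nat set))) (count_space UNIV)"
    proof (rule meas_sum_nat[where f="\<lambda>k x. x (n,k)"])
      fix k assume "k \<in> {..<N}"
      show "(\<lambda>x. x (n,k)) \<in> measurable (PiM K (\<lambda>_. count_space (UNIV::nat set))) (count_space UNIV)"
        using Suc.prems by (intro measurable_component_singleton) auto
    qed
  qed
  then show ?case by simp
qed

lemma (in prob_space) integral_split_nat:
  fixes N :: "'a \<Rightarrow> nat" and G :: "nat \<Rightarrow> 'a \<Rightarrow> complex"
  assumes N: "N \<in> measurable M (count_space UNIV)" and G: "\<And>z. G z \<in> borel_measurable M"
    and Gb: "\<And>z \<omega>. norm (G z \<omega>) \<le> 1"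
  shows "(\<integral>\<omega>. G (N \<omega>) \<omega> \<partial>M) = (\<Sum>z. \<integral>\<omega>. complex_of_real (indicator {\<omega>\<in>space M. N \<omega> = z} \<omega>) * G z \<omega> \<partial>M)"
proof -
  define S where "S z = {\<omega>\<in>space M. N \<omega> = z}" for z
  have S_meas: "S z \<in> sets M" for z
  proof -
    have "S z = N -` {z} \<inter> space M" by (auto simp: S_def)
    then show ?thesis using measurable_sets[OF N, of "{z}"] by simp
  qed
  let ?f = "\<lambda>z \<omega>. complex_of_real (indicator (S z) \<omega>) * G z \<omega>"
  have fz: "?f z \<omega> = (if z = N \<omega> then G z \<omega> else 0)" if "\<omega> \<in> space M" for z \<omega>
    using that by (auto simp: S_def indicator_def)
  have pw: "G (N \<omega>) \<omega> = (\<Sum>z. ?f z \<omega>)" if "\<omega> \<in> space M" for \<omega>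
    using sums_single[of "N \<omega>" "\<lambda>z. G z \<omega>"] fz[OF that] by (simp add: sums_iff)
  have fmeas: "?f z \<in> borel_measurable M" for z
    using S_meas G by measurable
  have fint: "integrable M (?f z)" for z
  proof (rule integrable_const_bound[where B=1])
    show "AE x in M. norm (?f z x) \<le> 1"
      using Gb by (auto simp: indicator_def norm_mult)
  qed (rule fmeas)
  have sumnorm: "AE \<omega> in M. summable (\<lambda>z. norm (?f z \<omega>))"
  proof (rule AE_I2)
    fix \<omega> assume w: "\<omega> \<in> space M"
    have "(\<lambda>z. norm (?f z \<omega>)) = (\<lambda>z. if z = N \<omega> then norm (G z \<omega>) else 0)"
      using fz[OF w] by auto
    then show "summable (\<lambda>z. norm (?f z \<omega>))"
      using sums_single[of "N \<omega>" "\<lambda>z. norm (G z \<omega>)"] by (simp add: sums_iff)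
  qed
  have disj: "disjoint_family S" by (auto simp: disjoint_family_on_def S_def)
  have "(\<lambda>z. measure M (S z)) sums (measure M (\<Union>z. S z))"
    by (rule measure_UNION) (use S_meas disj in auto)
  then have sumS: "summable (\<lambda>z. measure M (S z))" by (simp add: sums_iff)
  have bnd: "norm (\<integral>\<omega>. norm (?f z \<omega>) \<partial>M) \<le> measure M (S z)" for z
  proof -
    have "(\<integral>\<omega>. norm (?f z \<omega>) \<partial>M) \<le> (\<integral>\<omega>. indicator (S z) \<omega> \<partial>M)"
    proof (rule integral_mono)
      show "integrable M (\<lambda>\<omega>. norm (?f z \<omega>))" using fint by (rule integrable_norm)
      show "integrable M (\<lambda>\<omega>. indicator (S z) \<omega> :: real)" using S_meas[of z] by (intro integrable_real_indicator) (auto simp: emeasure_eq_measure)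
    qed (use Gb in \<open>auto simp: indicator_def norm_mult\<close>)
    also have "\<dots> = measure M (S z)" using S_meas by simp
    finally show ?thesis by simp
  qed
  have sumint: "summable (\<lambda>z. \<integral>\<omega>. norm (?f z \<omega>) \<partial>M)"
    by (rule summable_comparison_test'[OF sumS]) (rule bnd)
  have "(\<integral>\<omega>. G (N \<omega>) \<omega> \<partial>M) = (\<integral>\<omega>. (\<Sum>z. ?f z \<omega>) \<partial>M)"
    by (rule Bochner_Integration.integral_cong) (auto simp: pw)
  also have "\<dots> = (\<Sum>z. integral\<^sup>L M (?f z))"
    by (rule integral_suminf[OF fint sumnorm sumint])
  finally show ?thesis by (simp add: S_def)
qed

lemma (in prob_space) GW_step:
  fixes X :: "nat \<times> nat \<Rightarrow> 'a \<Rightarrow> nat" and f :: "complex \<Rightarrow> complex"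
  assumes ind: "indep_vars (\<lambda>_. count_space UNIV) X UNIV"
    and fX: "\<And>i w. norm w \<le> 1 \<Longrightarrow> (\<integral>\<omega>. w ^ X i \<omega> \<partial>M) = f w"
    and w: "norm w \<le> 1"
  shows "(\<integral>\<omega>. complex_of_real (indicator {\<omega>\<in>space M. GWf n (\<lambda>i. X i \<omega>) = z} \<omega>) *
             (\<Prod>k<z. w ^ X (n,k) \<omega>) \<partial>M)
         = complex_of_real (prob {\<omega>\<in>space M. GWf n (\<lambda>i. X i \<omega>) = z}) * f w ^ z"
proof -
  define L :: "nat option set" where "L = insert None (Some ` {..<z})"
  define K :: "nat option \<Rightarrow> (nat \<times> nat) set" where
    "K j = (case j of None \<Rightarrow> {(i,k). i<n} | Some k \<Rightarrow> {(n,k)})" for j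
  define Y :: "nat option \<Rightarrow> (nat \<times> nat \<Rightarrow> nat) \<Rightarrow> complex" where
    "Y j x = (case j of None \<Rightarrow> (if GWf n x = z then 1 else 0) | Some k \<Rightarrow> w ^ x (n,k))" for j x
  have Xm: "X i \<in> measurable M (count_space UNIV)" for i
    using ind unfolding indep_vars_def by blast
  have ind2: "indep_vars (\<lambda>j. PiM (K j) (\<lambda>_. count_space UNIV)) (\<lambda>j \<omega>. restrict (\<lambda>i. X i \<omega>) (K j)) L"
  proof (rule indep_vars_restrict[OF ind])
    show "disjoint_family_on K L"
      by (auto simp: disjoint_family_on_def K_def L_def split: option.splits)
  qed auto
  have Ym: "Y j \<in> borel_measurable (PiM (K j) (\<lambda>_. count_space UNIV))" for j
  proof (cases j)
    case None
    have "GWf n \<in> measurable (PiM (K j) (\<lambda>_. count_space UNIV)) (count_space UNIV)"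
      by (rule GWf_meas) (auto simp: K_def None)
    from measurable_compose[OF this borel_measurable_count_space[of "\<lambda>N. if N = z then 1 else (0::complex)"]]
    show ?thesis by (simp add: Y_def[abs_def] None)
  next
    case (Some k)
    have "(\<lambda>x. x (n,k)) \<in> measurable (PiM (K j) (\<lambda>_. count_space UNIV)) (count_space (UNIV::nat set))"
      by (rule measurable_component_singleton) (auto simp: K_def Some)
    from measurable_compose[OF this borel_measurable_count_space[of "\<lambda>N. w ^ N"]]
    show ?thesis by (simp add: Y_def[abs_def] Some)
  qed
  have ind3: "indep_vars (\<lambda>_. borel) (\<lambda>j \<omega>. Y j (restrict (\<lambda>i. X i \<omega>) (K j))) L"
    by (rule indep_vars_compose2[OF ind2 Ym])
  have Yb: "norm (Y j x) \<le> 1" for j x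
    using w by (auto simp: Y_def norm_power power_le_one split: option.splits)
  have Yint: "integrable M (\<lambda>\<omega>. Y j (restrict (\<lambda>i. X i \<omega>) (K j)))" for j
  proof (rule integrable_const_bound[where B=1])
    show "AE x in M. norm (Y j (restrict (\<lambda>i. X i x) (K j))) \<le> 1" using Yb by auto
    have "(\<lambda>\<omega>. restrict (\<lambda>i. X i \<omega>) (K j)) \<in> measurable M (PiM (K j) (\<lambda>_. count_space UNIV))"
      by (rule measurable_restrict) (rule Xm)
    from measurable_compose[OF this Ym] show "(\<lambda>\<omega>. Y j (restrict (\<lambda>i. X i \<omega>) (K j))) \<in> borel_measurable M" .
  qed
  have finL: "finite L" by (simp add: L_def)
  have main: "(\<integral>\<omega>. (\<Prod>j\<in>L. Y j (restrict (\<lambda>i. X i \<omega>) (K j))) \<partial>M)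
     = (\<Prod>j\<in>L. \<integral>\<omega>. Y j (restrict (\<lambda>i. X i \<omega>) (K j)) \<partial>M)"
    by (rule indep_vars_lebesgue_integral[OF finL ind3 Yint])
  have NoneL: "None \<notin> Some ` {..<z}" by auto
  have injS: "inj_on Some {..<z}" by auto
  have KN: "{(i,k). i<n} \<subseteq> K None" by (simp add: K_def)
  have lhs: "(\<Prod>j\<in>L. Y j (restrict (\<lambda>i. X i \<omega>) (K j))) =
     complex_of_real (indicator {\<omega>\<in>space M. GWf n (\<lambda>i. X i \<omega>) = z} \<omega>) * (\<Prod>k<z. w ^ X (n,k) \<omega>)"
    if "\<omega> \<in> space M" for \<omega>
  proof -
    have "(\<Prod>j\<in>L. Y j (restrict (\<lambda>i. X i \<omega>) (K j))) =
      Y None (restrict (\<lambda>i. X i \<omega>) (K None)) * (\<Prod>k<z. Y (Some k) (restrict (\<lambda>i. X i \<omega>) (K (Some k))))"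
      unfolding L_def by (simp add: prod.insert[OF _ NoneL] prod.reindex[OF injS])
    also have "Y None (restrict (\<lambda>i. X i \<omega>) (K None)) = complex_of_real (indicator {\<omega>\<in>space M. GWf n (\<lambda>i. X i \<omega>) = z} \<omega>)"
      using GWf_restrict[OF KN, of "\<lambda>i. X i \<omega>"] that by (simp add: Y_def indicator_def)
    also have "(\<Prod>k<z. Y (Some k) (restrict (\<lambda>i. X i \<omega>) (K (Some k)))) = (\<Prod>k<z. w ^ X (n,k) \<omega>)"
      by (simp add: Y_def K_def)
    finally show ?thesis .
  qed
  have rhs1: "(\<integral>\<omega>. Y None (restrict (\<lambda>i. X i \<omega>) (K None)) \<partial>M) = complex_of_real (prob {\<omega>\<in>space M. GWf n (\<lambda>i. X i \<omega>) = z})"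
  proof -
    have Zm: "(\<lambda>\<omega>. GWf n (\<lambda>i. X i \<omega>)) \<in> measurable M (count_space UNIV)"
    proof -
      have "(\<lambda>\<omega>. restrict (\<lambda>i. X i \<omega>) UNIV) \<in> measurable M (PiM UNIV (\<lambda>_. count_space UNIV))"
        by (rule measurable_restrict) (rule Xm)
      from measurable_compose[OF this GWf_meas[of n UNIV]] show ?thesis by (simp add: restrict_def)
    qed
    have Sm: "{\<omega>\<in>space M. GWf n (\<lambda>i. X i \<omega>) = z} \<in> sets M"
    proof -
      have "{\<omega>\<in>space M. GWf n (\<lambda>i. X i \<omega>) = z} = (\<lambda>\<omega>. GWf n (\<lambda>i. X i \<omega>)) -` {z} \<inter> space M" by auto
      then show ?thesis using measurable_sets[OF Zm, of "{z}"] by simp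
    qed
    have "(\<integral>\<omega>. Y None (restrict (\<lambda>i. X i \<omega>) (K None)) \<partial>M) =
        (\<integral>\<omega>. complex_of_real (indicator {\<omega>\<in>space M. GWf n (\<lambda>i. X i \<omega>) = z} \<omega>) \<partial>M)"
      by (rule Bochner_Integration.integral_cong) (auto simp: Y_def indicator_def GWf_restrict[OF KN])
    also have "\<dots> = complex_of_real (prob {\<omega>\<in>space M. GWf n (\<lambda>i. X i \<omega>) = z})"
      using Sm by simp
    finally show ?thesis .
  qed
  have rhs2: "(\<integral>\<omega>. Y (Some k) (restrict (\<lambda>i. X i \<omega>) (K (Some k))) \<partial>M) = f w" for k
    using fX[OF w, of "(n,k)"] by (simp add: Y_def K_def)
  have "(\<Prod>j\<in>L. \<integral>\<omega>. Y j (restrict (\<lambda>i. X i \<omega>) (K j)) \<partial>M) =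
     complex_of_real (prob {\<omega>\<in>space M. GWf n (\<lambda>i. X i \<omega>) = z}) * f w ^ z"
    unfolding L_def by (simp add: prod.insert[OF _ NoneL] prod.reindex[OF injS] rhs1 rhs2)
  moreover have "(\<integral>\<omega>. (\<Prod>j\<in>L. Y j (restrict (\<lambda>i. X i \<omega>) (K j))) \<partial>M) =
     (\<integral>\<omega>. complex_of_real (indicator {\<omega>\<in>space M. GWf n (\<lambda>i. X i \<omega>) = z} \<omega>) * (\<Prod>k<z. w ^ X (n,k) \<omega>) \<partial>M)"
    by (rule Bochner_Integration.integral_cong) (auto simp: lhs)
  ultimately show ?thesis using main by simp
qed

lemma (in prob_space) GWf_rv:
  fixes X :: "nat \<times> nat \<Rightarrow> 'a \<Rightarrow> nat"
  assumes Xm: "\<And>i. X i \<in> measurable M (count_space UNIV)"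
  shows "(\<lambda>\<omega>. GWf n (\<lambda>i. X i \<omega>)) \<in> measurable M (count_space UNIV)"
proof -
  have "(\<lambda>\<omega>. restrict (\<lambda>i. X i \<omega>) UNIV) \<in> measurable M (PiM UNIV (\<lambda>_. count_space UNIV))"
    by (rule measurable_restrict) (rule Xm)
  from measurable_compose[OF this GWf_meas[of n UNIV]] show ?thesis by (simp add: restrict_def)
qed

lemma (in prob_space) GW_pgf:
  fixes X :: "nat \<times> nat \<Rightarrow> 'a \<Rightarrow> nat" and f :: "complex \<Rightarrow> complex"
  assumes ind: "indep_vars (\<lambda>_. count_space UNIV) X UNIV"
    and fX: "\<And>i w. norm w \<le> 1 \<Longrightarrow> (\<integral>\<omega>. w ^ X i \<omega> \<partial>M) = f w"
    and fb: "\<And>w. norm w \<le> 1 \<Longrightarrow> norm (f w) \<le> 1"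
  shows "norm w \<le> 1 \<Longrightarrow> (\<integral>\<omega>. w ^ GWf n (\<lambda>i. X i \<omega>) \<partial>M) = (f ^^ n) w"
proof (induction n arbitrary: w)
  case 0
  then show ?case by (simp add: prob_space)
next
  case (Suc n)
  have Xm: "X i \<in> measurable M (count_space UNIV)" for i
    using ind unfolding indep_vars_def by blast
  note Zm = GWf_rv[OF Xm, of n]
  let ?S = "\<lambda>z. {\<omega>\<in>space M. GWf n (\<lambda>i. X i \<omega>) = z}"
  have "(\<integral>\<omega>. w ^ GWf (Suc n) (\<lambda>i. X i \<omega>) \<partial>M) =
      (\<integral>\<omega>. (\<lambda>z \<omega>. \<Prod>k<z. w ^ X (n,k) \<omega>) (GWf n (\<lambda>i. X i \<omega>)) \<omega> \<partial>M)"
    by (simp add: power_sum)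
  also have "\<dots> = (\<Sum>z. \<integral>\<omega>. complex_of_real (indicator (?S z) \<omega>) * (\<Prod>k<z. w ^ X (n,k) \<omega>) \<partial>M)"
  proof (rule integral_split_nat[OF Zm])
    fix z
    show "(\<lambda>\<omega>. \<Prod>k<z. w ^ X (n, k) \<omega>) \<in> borel_measurable M"
    proof (rule borel_measurable_prod)
      fix k
      from measurable_compose[OF Xm borel_measurable_count_space[of "\<lambda>N. w ^ N"]]
      show "(\<lambda>\<omega>. w ^ X (n, k) \<omega>) \<in> borel_measurable M" .
    qed
  next
    fix z \<omega>
    show "norm (\<Prod>k<z. w ^ X (n, k) \<omega>) \<le> 1"
      unfolding prod_norm[symmetric] norm_power using Suc.prems by (intro prod_le_1) (auto simp: power_le_one)
  qed
  also have "\<dots> = (\<Sum>z. complex_of_real (prob (?S z)) * f w ^ z)"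
    by (simp add: GW_step[OF ind fX Suc.prems])
  also have "\<dots> = (\<Sum>z. \<integral>\<omega>. complex_of_real (indicator (?S z) \<omega>) * f w ^ z \<partial>M)"
  proof -
    have Sm: "?S z \<in> sets M" for z
    proof -
      have "?S z = (\<lambda>\<omega>. GWf n (\<lambda>i. X i \<omega>)) -` {z} \<inter> space M" by auto
      then show ?thesis using measurable_sets[OF Zm, of "{z}"] by simp
    qed
    show ?thesis using Sm by simp
  qed
  also have "\<dots> = (\<integral>\<omega>. (\<lambda>z \<omega>. f w ^ z) (GWf n (\<lambda>i. X i \<omega>)) \<omega> \<partial>M)"
    by (rule integral_split_nat[OF Zm, symmetric])
       (use fb[OF Suc.prems] in \<open>auto simp: norm_power power_le_one\<close>)
  also have "\<dots> = (f ^^ n) (f w)"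
    using Suc.IH[OF fb[OF Suc.prems]] by simp
  finally show ?case by (simp only: funpow_Suc_right comp_def)
qed

lemma pmf_sums_integral:
  fixes f :: "nat \<Rightarrow> 'b::{banach, second_countable_topology}"
  assumes B: "\<And>j. norm (f j) \<le> B"
  shows "(\<lambda>j. pmf P j *\<^sub>R f j) sums (\<integral>x. f x \<partial>measure_pmf P)"
proof -
  have int: "integrable (measure_pmf P) f"
    by (rule measure_pmf.integrable_const_bound[where B=B]) (use B in auto)
  have int2: "integrable (count_space UNIV) (\<lambda>x. pmf P x *\<^sub>R f x)"
    using int unfolding measure_pmf_eq_density
    by (subst (asm) integrable_density) auto
  have "(\<integral>x. f x \<partial>measure_pmf P) = (\<integral>x. pmf P x *\<^sub>R f x \<partial>count_space UNIV)"
    unfolding measure_pmf_eq_density by (subst integral_density) auto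
  then show ?thesis using sums_integral_count_space_nat[OF int2] by simp
qed

lemma gf_integral:
  assumes "norm w \<le> 1"
  shows "gf (pmf P) w = (\<integral>x. w ^ x \<partial>measure_pmf P)"
proof -
  have "(\<lambda>j. pmf P j *\<^sub>R w ^ j) sums (\<integral>x. w ^ x \<partial>measure_pmf P)"
    by (rule pmf_sums_integral[where B=1]) (use assms in \<open>auto simp: norm_power power_le_one\<close>)
  then show ?thesis unfolding gf_def by (simp add: sums_iff scaleR_conv_of_real)
qed

definition pgfr :: "nat pmf \<Rightarrow> real \<Rightarrow> real" where
  "pgfr P x = (\<integral>j. x ^ j \<partial>measure_pmf P)"

lemma pgfr_int: assumes "\<bar>x::real\<bar> \<le> 1" shows "integrable (measure_pmf P) (\<lambda>j. x ^ j)"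
proof (rule measure_pmf.integrable_const_bound[where B=1])
  from assms show "AE j in measure_pmf P. norm (x ^ j) \<le> 1"
    by (auto simp: power_abs power_le_one)
qed auto

lemma gf_norm_le:
  assumes "norm w \<le> 1"
  shows "norm (gf (pmf P) w) \<le> pgfr P (norm w)"
proof -
  have "norm (gf (pmf P) w) = norm (\<integral>x. w ^ x \<partial>measure_pmf P)" by (simp add: gf_integral[OF assms])
  also have "\<dots> \<le> (\<integral>x. norm (w ^ x) \<partial>measure_pmf P)" by (rule integral_norm_bound)
  also have "\<dots> = pgfr P (norm w)" by (simp add: pgfr_def norm_power)
  finally show ?thesis .
qed

lemma pgfr_nonneg: "0 \<le> x \<Longrightarrow> 0 \<le> pgfr P x"
  unfolding pgfr_def by (rule integral_nonneg_AE) auto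

lemma pgfr_mono: "0 \<le> x \<Longrightarrow> x \<le> y \<Longrightarrow> y \<le> 1 \<Longrightarrow> pgfr P x \<le> pgfr P y"
  unfolding pgfr_def
  by (rule integral_mono) (auto intro!: pgfr_int power_mono)

lemma pgfr_le_pow:
  assumes "\<And>j. pmf P j > 0 \<Longrightarrow> mu \<le> j" "0 \<le> x" "x \<le> 1"
  shows "pgfr P x \<le> x ^ mu"
proof -
  have "pgfr P x \<le> (\<integral>j. x ^ mu \<partial>measure_pmf P)"
    unfolding pgfr_def
  proof (rule integral_mono_AE)
    show "AE j in measure_pmf P. x ^ j \<le> x ^ mu"
      unfolding AE_measure_pmf_iff using assms
      by (auto simp: set_pmf_iff intro!: power_decreasing)
  qed (use assms in \<open>auto intro!: pgfr_int\<close>)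
  then show ?thesis by (simp add: measure_pmf.prob_space)
qed

lemma pgfr_le_schroeder:
  assumes "pmf P 0 = 0" "0 \<le> x" "x \<le> 1"
  shows "pgfr P x \<le> pmf P 1 * x + (1 - pmf P 1) * x\<^sup>2"
proof -
  have "pgfr P x \<le> (\<integral>j. (x - x\<^sup>2) * indicator {1} j + x\<^sup>2 \<partial>measure_pmf P)"
    unfolding pgfr_def
  proof (rule integral_mono_AE)
    show "AE j in measure_pmf P. x ^ j \<le> (x - x\<^sup>2) * indicator {1} j + x\<^sup>2"
      unfolding AE_measure_pmf_iff
    proof
      fix j assume "j \<in> set_pmf P"
      then have "j \<noteq> 0" using assms(1) by (metis set_pmf_iff)
      then show "x ^ j \<le> (x - x\<^sup>2) * indicator {1} j + x\<^sup>2"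
      proof (cases "j = 1")
        case False
        with \<open>j \<noteq> 0\<close> have "2 \<le> j" by auto
        then have "x ^ j \<le> x\<^sup>2" using assms by (intro power_decreasing) auto
        then show ?thesis using False by simp
      qed simp
    qed
    show "integrable (measure_pmf P) (\<lambda>j. (x - x\<^sup>2) * indicator {1} j + x\<^sup>2)"
    proof (rule measure_pmf.integrable_const_bound[where B=2])
      have "x\<^sup>2 \<le> 1" using assms by (simp add: power_le_one)
      then show "AE j in measure_pmf P. norm ((x - x\<^sup>2) * indicator {1} j + x\<^sup>2) \<le> 2"
        using assms by (intro AE_I2) (auto simp: indicator_def)
    qed auto
  qed (use assms in \<open>auto intro!: pgfr_int\<close>)
  also have "\<dots> = (x - x\<^sup>2) * pmf P 1 + x\<^sup>2"
  proof -
    have i1: "integrable (measure_pmf P) (\<lambda>j. (x - x\<^sup>2) * indicator {1} j)"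
      by (intro integrable_mult_right) (auto simp: measure_pmf.emeasure_eq_measure)
    have "(\<integral>j. (x - x\<^sup>2) * indicator {1} j + x\<^sup>2 \<partial>measure_pmf P)
       = (\<integral>j. (x - x\<^sup>2) * indicator {1} j \<partial>measure_pmf P) + (\<integral>j. x\<^sup>2 \<partial>measure_pmf P)"
      by (rule Bochner_Integration.integral_add[OF i1]) auto
    also have "\<dots> = (x - x\<^sup>2) * pmf P 1 + x\<^sup>2"
      by (simp add: measure_pmf.prob_space measure_pmf_single)
    finally show ?thesis .
  qed
  finally show ?thesis by (simp add: algebra_simps)
qed

lemma pgfr_le1: "0 \<le> x \<Longrightarrow> x \<le> 1 \<Longrightarrow> pgfr P x \<le> 1"
  using pgfr_le_pow[of P 0 x] by simp

lemma pgfr_iter_range: "0 \<le> x \<Longrightarrow> x \<le> 1 \<Longrightarrow> 0 \<le> (pgfr P ^^ N) x \<and> (pgfr P ^^ N) x \<le> 1"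
  by (induction N) (auto intro: pgfr_nonneg pgfr_le1)

lemma gf_iter_bound:
  assumes "norm w \<le> x" "x \<le> 1"
  shows "norm ((gf (pmf P) ^^ N) w) \<le> (pgfr P ^^ N) x"
proof (induction N)
  case 0
  then show ?case using assms by simp
next
  case (Suc N)
  have x0: "0 \<le> x" using assms(1) norm_ge_zero order_trans by blast
  have r: "0 \<le> (pgfr P ^^ N) x" "(pgfr P ^^ N) x \<le> 1" using pgfr_iter_range[OF x0 assms(2)] by auto
  have n1: "norm ((gf (pmf P) ^^ N) w) \<le> 1" using Suc.IH r by linarith
  have "norm ((gf (pmf P) ^^ Suc N) w) = norm (gf (pmf P) ((gf (pmf P) ^^ N) w))" by simp
  also have "\<dots> \<le> pgfr P (norm ((gf (pmf P) ^^ N) w))" by (rule gf_norm_le[OF n1])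
  also have "\<dots> \<le> pgfr P ((pgfr P ^^ N) x)" by (rule pgfr_mono[OF norm_ge_zero Suc.IH r(2)])
  finally show ?case by simp
qed

lemma pgfr_iter_pow:
  assumes "\<And>j. pmf P j > 0 \<Longrightarrow> mu \<le> j" "0 \<le> x" "x \<le> 1"
  shows "(pgfr P ^^ N) x \<le> x ^ (mu ^ N)"
proof (induction N)
  case 0 then show ?case by simp
next
  case (Suc N)
  have r: "0 \<le> (pgfr P ^^ N) x" "(pgfr P ^^ N) x \<le> 1" using pgfr_iter_range[OF assms(2,3)] by auto
  have "(pgfr P ^^ Suc N) x = pgfr P ((pgfr P ^^ N) x)" by simp
  also have "\<dots> \<le> ((pgfr P ^^ N) x) ^ mu" by (rule pgfr_le_pow[OF assms(1) r])
  also have "\<dots> \<le> (x ^ (mu ^ N)) ^ mu" by (rule power_mono[OF Suc.IH r(1)])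
  also have "\<dots> = x ^ (mu ^ Suc N)" by (simp add: power_mult[symmetric] mult.commute)
  finally show ?case .
qed

lemma schroeder_iter:
  fixes g :: "real \<Rightarrow> real"
  assumes q: "0 < q" "q < 1"
    and g: "\<And>y. 0 \<le> y \<Longrightarrow> y \<le> 1 \<Longrightarrow> 0 \<le> g y \<and> g y \<le> q * y + (1 - q) * y\<^sup>2"
    and x: "0 \<le> x" "x < 1"
  shows "\<exists>C>0. \<forall>N. (g ^^ N) x \<le> C * q ^ N"
proof -
  define \<rho> where "\<rho> = q + (1 - q) * x"
  have "(1 - q) * x < (1 - q) * 1" using q x by (intro mult_strict_left_mono) auto
  then have h1: "(1 - q) * x < 1 - q" by simp
  have h2: "0 \<le> (1 - q) * x" using q x by auto
  have \<rho>: "0 < \<rho>" "\<rho> < 1" unfolding \<rho>_def using h1 h2 q by linarith+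
  define \<kappa> where "\<kappa> = (1 - q) * x / q"
  have \<kappa>: "0 \<le> \<kappa>" using q x by (simp add: \<kappa>_def)
  have c1: "0 \<le> (g ^^ N) x \<and> (g ^^ N) x \<le> x * \<rho> ^ N \<and> (g ^^ N) x \<le> x" for N
  proof (induction N)
    case 0 then show ?case using x by simp
  next
    case (Suc N)
    let ?y = "(g ^^ N) x"
    have y: "0 \<le> ?y" "?y \<le> x" "?y \<le> x * \<rho> ^ N" using Suc by auto
    have y1: "?y \<le> 1" using y x by linarith
    have "g ?y \<le> q * ?y + (1 - q) * ?y\<^sup>2" using g[OF y(1) y1] by simp
    also have "\<dots> = ?y * (q + (1 - q) * ?y)" by (simp add: power2_eq_square algebra_simps)
    also have "\<dots> \<le> ?y * \<rho>"
      unfolding \<rho>_def using y q by (intro mult_left_mono) (auto intro!: mult_left_mono)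
    finally have gy: "g ?y \<le> ?y * \<rho>" .
    have "?y * \<rho> \<le> x * \<rho> ^ N * \<rho>" using y \<rho> by (intro mult_right_mono) auto
    moreover have "?y * \<rho> \<le> ?y" using y \<rho> by (simp add: mult_left_le)
    ultimately show ?case using gy g[OF y(1) y1] y by (auto simp: mult.commute mult.left_commute)
  qed
  have c2: "(g ^^ N) x \<le> q ^ N * x * exp (\<kappa> * (\<Sum>i<N. \<rho> ^ i))" for N
  proof (induction N)
    case 0 then show ?case by simp
  next
    case (Suc N)
    let ?y = "(g ^^ N) x"
    have y: "0 \<le> ?y" "?y \<le> x" "?y \<le> x * \<rho> ^ N" using c1[of N] by auto
    have y1: "?y \<le> 1" using y x by linarith
    have "g ?y \<le> q * ?y + (1 - q) * ?y\<^sup>2" using g[OF y(1) y1] by simp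
    also have "\<dots> = q * ?y * (1 + (1 - q) / q * ?y)" using q by (simp add: power2_eq_square field_simps)
    also have "\<dots> \<le> q * ?y * (1 + \<kappa> * \<rho> ^ N)"
    proof -
      have "(1 - q) / q * ?y \<le> (1 - q) / q * (x * \<rho> ^ N)"
        using y q by (intro mult_left_mono) auto
      then have "(1 - q) / q * ?y \<le> \<kappa> * \<rho> ^ N" by (simp add: \<kappa>_def field_simps)
      then show ?thesis using q y by (intro mult_left_mono) auto
    qed
    also have "\<dots> \<le> q * ?y * exp (\<kappa> * \<rho> ^ N)"
    proof -
      have "1 + \<kappa> * \<rho> ^ N \<le> exp (\<kappa> * \<rho> ^ N)" by (rule exp_ge_add_one_self)
      then show ?thesis using q y by (intro mult_left_mono) auto
    qed
    also have "\<dots> \<le> q * (q ^ N * x * exp (\<kappa> * (\<Sum>i<N. \<rho> ^ i))) * exp (\<kappa> * \<rho> ^ N)"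
      using Suc.IH q by (intro mult_right_mono mult_left_mono) auto
    also have "\<dots> = q ^ Suc N * x * exp (\<kappa> * (\<Sum>i<Suc N. \<rho> ^ i))"
      by (simp add: distrib_left exp_add)
    finally show ?case by simp
  qed
  define C where "C = x * exp (\<kappa> / (1 - \<rho>)) + 1"
  have C: "C > 0" using x by (simp add: C_def add_nonneg_pos)
  have "(g ^^ N) x \<le> C * q ^ N" for N
  proof -
    have s: "(\<Sum>i<N. \<rho> ^ i) \<le> 1 / (1 - \<rho>)"
    proof -
      have "(\<Sum>i<N. \<rho> ^ i) = (1 - \<rho> ^ N) / (1 - \<rho>)" using \<rho> by (simp add: sum_gp_strict)
      also have "\<dots> \<le> 1 / (1 - \<rho>)" using \<rho> by (intro divide_right_mono) auto
      finally show ?thesis .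
    qed
    have "exp (\<kappa> * (\<Sum>i<N. \<rho> ^ i)) \<le> exp (\<kappa> / (1 - \<rho>))"
      using mult_left_mono[OF s \<kappa>] by simp
    then have "q ^ N * x * exp (\<kappa> * (\<Sum>i<N. \<rho> ^ i)) \<le> q ^ N * x * exp (\<kappa> / (1 - \<rho>))"
      using q x by (intro mult_left_mono) auto
    also have "\<dots> \<le> C * q ^ N" using q by (simp add: C_def algebra_simps)
    finally show ?thesis using c2[of N] by linarith
  qed
  then show ?thesis using C by blast
qed

definition cfx :: "'a measure \<Rightarrow> ('a \<Rightarrow> real) \<Rightarrow> complex \<Rightarrow> complex" where
  "cfx M Y a = (\<integral>\<omega>. exp (a * complex_of_real (max 0 (Y \<omega>))) \<partial>M)"

lemma norm_exp_pos: "Re a \<le> 0 \<Longrightarrow> 0 \<le> t \<Longrightarrow> norm (exp (a * complex_of_real t)) \<le> 1"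
  by (simp add: mult_nonpos_nonneg)

lemma norm_exp_eq: "norm (exp (a * complex_of_real t)) = exp (Re a * t)"
  by simp

lemma exp_lipschitz:
  assumes "Re a \<le> 0" "0 \<le> s" "0 \<le> t"
  shows "norm (exp (a * complex_of_real s) - exp (a * complex_of_real t)) \<le> norm a * \<bar>s - t\<bar>"
proof -
  have "norm (exp (a * complex_of_real s) - exp (a * complex_of_real t)) \<le> 1 * norm (a * complex_of_real s - a * complex_of_real t)"
  proof (rule field_differentiable_bound[OF convex_halfspace_Re_le[of 0]])
    fix z :: complex assume "z \<in> {x. Re x \<le> 0}"
    then show "norm (exp z) \<le> 1" by simp
  next
    fix z :: complex
    show "(exp has_field_derivative exp z) (at z within {x. Re x \<le> 0})"
      by (rule DERIV_subset[OF DERIV_exp]) auto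
  qed (use assms in \<open>auto simp: mult_nonpos_nonneg\<close>)
  also have "\<dots> = norm a * \<bar>s - t\<bar>"
    by (simp add: right_diff_distrib[symmetric] norm_mult of_real_diff[symmetric] del: of_real_diff)
  finally show ?thesis .
qed

context prob_space
begin

lemma cfx_meas:
  assumes "Y \<in> borel_measurable M"
  shows "(\<lambda>\<omega>. exp (a * complex_of_real (max 0 (Y \<omega>)))) \<in> borel_measurable M"
  using assms by measurable

lemma cfx_int:
  assumes "Y \<in> borel_measurable M" "Re a \<le> 0"
  shows "integrable M (\<lambda>\<omega>. exp (a * complex_of_real (max 0 (Y \<omega>))))"
proof (rule integrable_const_bound[where B=1])
  show "AE x in M. norm (exp (a * complex_of_real (max 0 (Y x)))) \<le> 1"
    using assms by (intro AE_I2 norm_exp_pos) auto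
qed (rule cfx_meas[OF assms(1)])

lemma cfx_cont:
  assumes Y: "Y \<in> borel_measurable M"
  shows "continuous_on {a. Re a \<le> 0} (cfx M Y)"
proof (rule continuous_on_sequentiallyI)
  fix u :: "nat \<Rightarrow> complex" and a
  assume u: "\<forall>n. u n \<in> {a. Re a \<le> 0}" and a: "a \<in> {a. Re a \<le> 0}" and lim: "u \<longlonglongrightarrow> a"
  show "(\<lambda>n. cfx M Y (u n)) \<longlonglongrightarrow> cfx M Y a"
    unfolding cfx_def
  proof (rule integral_dominated_convergence[where w="\<lambda>_. 1"])
    show "AE x in M. (\<lambda>i. exp (u i * complex_of_real (max 0 (Y x)))) \<longlonglongrightarrow> exp (a * complex_of_real (max 0 (Y x)))"
      by (intro AE_I2 tendsto_intros lim)
    show "AE x in M. norm (exp (u i * complex_of_real (max 0 (Y x)))) \<le> 1" for i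
      using u by (intro AE_I2 norm_exp_pos) auto
  qed (use Y in auto)
qed

lemma cfx_lt1_neg:
  assumes Y: "Y \<in> borel_measurable M" and nz: "\<not> (AE \<omega> in M. Y \<omega> \<le> 0)" and a: "Re a < 0"
  shows "(\<integral>\<omega>. exp (Re a * max 0 (Y \<omega>)) \<partial>M) < 1"
proof (rule ccontr)
  assume "\<not> ?thesis"
  then have ge: "1 \<le> (\<integral>\<omega>. exp (Re a * max 0 (Y \<omega>)) \<partial>M)" by simp
  have int: "integrable M (\<lambda>\<omega>. exp (Re a * max 0 (Y \<omega>)))"
    by (rule integrable_const_bound[where B=1]) (use a Y in \<open>auto intro!: AE_I2 simp: mult_nonpos_nonneg\<close>)
  have int2: "integrable M (\<lambda>\<omega>. 1 - exp (Re a * max 0 (Y \<omega>)))"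
    using int by auto
  have nn: "AE \<omega> in M. 0 \<le> 1 - exp (Re a * max 0 (Y \<omega>))"
    using a by (intro AE_I2) (auto simp: mult_nonpos_nonneg)
  have "(\<integral>\<omega>. 1 - exp (Re a * max 0 (Y \<omega>)) \<partial>M) = 1 - (\<integral>\<omega>. exp (Re a * max 0 (Y \<omega>)) \<partial>M)"
    using int by (simp add: prob_space)
  moreover have "(\<integral>\<omega>. 1 - exp (Re a * max 0 (Y \<omega>)) \<partial>M) \<ge> 0"
    using nn by (rule integral_nonneg_AE)
  ultimately have "(\<integral>\<omega>. 1 - exp (Re a * max 0 (Y \<omega>)) \<partial>M) = 0" using ge by linarith
  then have "AE \<omega> in M. 1 - exp (Re a * max 0 (Y \<omega>)) = 0"
    using integral_nonneg_eq_0_iff_AE[OF int2 nn] by simp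
  then have "AE \<omega> in M. Y \<omega> \<le> 0"
  proof (rule AE_mp, intro AE_I2 impI)
    fix \<omega> assume "1 - exp (Re a * max 0 (Y \<omega>)) = 0"
    then have "Re a * max 0 (Y \<omega>) = 0" by simp
    then show "Y \<omega> \<le> 0" using a by auto
  qed
  with nz show False by simp
qed

lemma cfx_norm_le_re:
  assumes Y: "Y \<in> borel_measurable M" and a: "Re a \<le> 0"
  shows "norm (cfx M Y a) \<le> (\<integral>\<omega>. exp (Re a * max 0 (Y \<omega>)) \<partial>M)"
  unfolding cfx_def by (rule order_trans[OF integral_norm_bound]) simp

lemma cfx_mono_re:
  assumes Y: "Y \<in> borel_measurable M" and a: "Re a \<le> b" "b \<le> 0"
  shows "(\<integral>\<omega>. exp (Re a * max 0 (Y \<omega>)) \<partial>M) \<le> (\<integral>\<omega>. exp (b * max 0 (Y \<omega>)) \<partial>M)"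
proof (rule integral_mono)
  show "integrable M (\<lambda>\<omega>. exp (Re a * max 0 (Y \<omega>)))"
    by (rule integrable_const_bound[where B=1]) (use a Y in \<open>auto intro!: AE_I2 simp: mult_nonpos_nonneg\<close>)
  show "integrable M (\<lambda>\<omega>. exp (b * max 0 (Y \<omega>)))"
    by (rule integrable_const_bound[where B=1]) (use a Y in \<open>auto intro!: AE_I2 simp: mult_nonpos_nonneg\<close>)
  fix \<omega> show "exp (Re a * max 0 (Y \<omega>)) \<le> exp (b * max 0 (Y \<omega>))"
    using a by (auto intro!: mult_right_mono)
qed

lemma cfx_norm_le: "Y \<in> borel_measurable M \<Longrightarrow> Re a \<le> 0 \<Longrightarrow> norm (cfx M Y a) \<le> 1"
  using cfx_norm_le_re[of Y a] cfx_mono_re[of Y a 0] by (simp add: prob_space)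

lemma norm1_imp_const:
  fixes Z :: "'a \<Rightarrow> complex"
  assumes Z: "integrable M Z" and b: "\<And>\<omega>. norm (Z \<omega>) \<le> 1" and n1: "norm (integral\<^sup>L M Z) = 1"
  shows "AE \<omega> in M. Z \<omega> = integral\<^sup>L M Z"
proof -
  define c where "c = integral\<^sup>L M Z"
  have c1: "norm c = 1" using n1 by (simp add: c_def)
  have "c * cnj c = complex_of_real ((cmod c)\<^sup>2)" by (rule complex_norm_square[symmetric])
  then have cc: "cnj c * c = 1" using c1 by (simp add: mult.commute)
  let ?R = "\<lambda>\<omega>. 1 - Re (cnj c * Z \<omega>)"
  have intR: "integrable M ?R" using Z by auto
  have nn: "AE \<omega> in M. 0 \<le> ?R \<omega>"
  proof (intro AE_I2)
    fix \<omega>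
    have "Re (cnj c * Z \<omega>) \<le> norm (cnj c * Z \<omega>)" by (rule complex_Re_le_cmod)
    also have "\<dots> \<le> 1" using b[of \<omega>] c1 by (simp add: norm_mult)
    finally show "0 \<le> ?R \<omega>" by simp
  qed
  have "integral\<^sup>L M ?R = 1 - Re (cnj c * c)"
    using Z by (simp add: prob_space c_def)
  then have "integral\<^sup>L M ?R = 0" using cc by simp
  then have ae: "AE \<omega> in M. ?R \<omega> = 0" using integral_nonneg_eq_0_iff_AE[OF intR nn] by simp
  show ?thesis
  proof (rule AE_mp[OF ae], intro AE_I2 impI)
    fix \<omega> assume r: "?R \<omega> = 0"
    define v where "v = cnj c * Z \<omega>"
    have rv: "Re v = 1" using r by (simp add: v_def)
    have nv: "norm v \<le> 1" using b[of \<omega>] c1 by (simp add: v_def norm_mult)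
    have "(Re v)\<^sup>2 + (Im v)\<^sup>2 \<le> 1" using nv
      by (metis cmod_power2 norm_ge_zero power_le_one power2_eq_square one_power2 power_mono)
    then have "Im v = 0" using rv by simp
    then have "v = 1" using rv by (simp add: complex_eq_iff)
    then have "c * v = c" by simp
    then have "Z \<omega> = c" unfolding v_def using cc by (simp add: mult.assoc[symmetric] mult.commute[of c])
    then show "Z \<omega> = integral\<^sup>L M Z" by (simp add: c_def)
  qed
qed


lemma cfx_lt1_neg':
  assumes Y: "Y \<in> borel_measurable M" and nz: "\<not> (AE \<omega> in M. Y \<omega> \<le> 0)" and a: "Re a < 0"
  shows "norm (cfx M Y a) < 1"
  using cfx_norm_le_re[OF Y] cfx_lt1_neg[OF Y nz a] a by (meson less_imp_le order.strict_trans1)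

lemma cfx_band_bound:
  assumes Y: "Y \<in> borel_measurable M" and nz: "\<not> (AE \<omega> in M. Y \<omega> \<le> 0)" and lo: "0 < lo" "lo \<le> hi"
    and im: "\<And>a. Re a = 0 \<Longrightarrow> lo \<le> \<bar>Im a\<bar> \<Longrightarrow> \<bar>Im a\<bar> \<le> hi \<Longrightarrow> norm (cfx M Y a) < 1"
  shows "\<exists>\<theta><1. \<forall>a. Re a \<le> 0 \<longrightarrow> lo \<le> \<bar>Im a\<bar> \<longrightarrow> \<bar>Im a\<bar> \<le> hi \<longrightarrow> norm (cfx M Y a) \<le> \<theta>"
proof -
  define K where "K = {a. -1 \<le> Re a \<and> Re a \<le> 0 \<and> lo \<le> \<bar>Im a\<bar> \<and> \<bar>Im a\<bar> \<le> hi}"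
  have K_eq: "K = {a. -1 \<le> Re a} \<inter> {a. Re a \<le> 0} \<inter> {a. lo \<le> \<bar>Im a\<bar>} \<inter> {a. \<bar>Im a\<bar> \<le> hi}"
    by (auto simp: K_def)
  have "closed K" unfolding K_eq
    by (intro closed_Int closed_Collect_le continuous_intros)
  moreover have "bounded K"
  proof -
    have "norm a \<le> 1 + hi" if "a \<in> K" for a
    proof -
      have "norm a \<le> \<bar>Re a\<bar> + \<bar>Im a\<bar>" by (rule cmod_le)
      also have "\<dots> \<le> 1 + hi" using that by (auto simp: K_def)
      finally show ?thesis .
    qed
    then show ?thesis unfolding bounded_iff by blast
  qed
  ultimately have cK: "compact K" by (simp add: compact_eq_bounded_closed)
  have neK: "K \<noteq> {}"
  proof -
    have "Complex 0 lo \<in> K" using lo by (auto simp: K_def)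
    then show ?thesis by auto
  qed
  have KS: "K \<subseteq> {a. Re a \<le> 0}" by (auto simp: K_def)
  have cont: "continuous_on K (\<lambda>a. norm (cfx M Y a))"
    by (intro continuous_on_norm continuous_on_subset[OF cfx_cont[OF Y] KS])
  obtain a0 where a0: "a0 \<in> K" and amax: "\<And>a. a \<in> K \<Longrightarrow> norm (cfx M Y a) \<le> norm (cfx M Y a0)"
    using continuous_attains_sup[OF cK neK cont] by blast
  have t1: "norm (cfx M Y a0) < 1"
  proof (cases "Re a0 < 0")
    case True then show ?thesis by (rule cfx_lt1_neg'[OF Y nz])
  next
    case False
    then have "Re a0 = 0" using a0 by (auto simp: K_def)
    then show ?thesis using a0 by (intro im) (auto simp: K_def)
  qed
  define \<phi>1 where "\<phi>1 = (\<integral>\<omega>. exp (Re (-1) * max 0 (Y \<omega>)) \<partial>M)"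
  have p1: "\<phi>1 < 1" unfolding \<phi>1_def by (rule cfx_lt1_neg[OF Y nz]) simp
  define \<theta> where "\<theta> = max (norm (cfx M Y a0)) \<phi>1"
  have "\<theta> < 1" using t1 p1 by (simp add: \<theta>_def)
  moreover have "norm (cfx M Y a) \<le> \<theta>" if a: "Re a \<le> 0" "lo \<le> \<bar>Im a\<bar>" "\<bar>Im a\<bar> \<le> hi" for a
  proof (cases "-1 \<le> Re a")
    case True
    then have "a \<in> K" using a by (auto simp: K_def)
    then show ?thesis using amax[of a] by (simp add: \<theta>_def)
  next
    case False
    have "norm (cfx M Y a) \<le> (\<integral>\<omega>. exp (Re a * max 0 (Y \<omega>)) \<partial>M)" by (rule cfx_norm_le_re[OF Y a(1)])
    also have "\<dots> \<le> \<phi>1" unfolding \<phi>1_def using False by (intro cfx_mono_re[OF Y]) auto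
    finally show ?thesis by (simp add: \<theta>_def)
  qed
  ultimately show ?thesis by blast
qed


lemma cfx_unif:
  assumes Xm: "\<And>j. X j \<in> borel_measurable M" and Y: "Y \<in> borel_measurable M"
    and lim: "AE \<omega> in M. (\<lambda>j. X j \<omega>) \<longlonglongrightarrow> Y \<omega>" and R: "0 \<le> R"
  shows "\<exists>\<eta>. \<eta> \<longlonglongrightarrow> 0 \<and> (\<forall>j a. Re a \<le> 0 \<longrightarrow> norm a \<le> R \<longrightarrow> norm (cfx M (X j) a - cfx M Y a) \<le> \<eta> j)"
proof -
  define \<eta> where "\<eta> j = (\<integral>\<omega>. min 2 (R * \<bar>X j \<omega> - Y \<omega>\<bar>) \<partial>M)" for j
  have \<eta>m: "(\<lambda>\<omega>. min 2 (R * \<bar>X j \<omega> - Y \<omega>\<bar>)) \<in> borel_measurable M" for j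
    using Xm[of j] Y by measurable
  have \<eta>int: "integrable M (\<lambda>\<omega>. min 2 (R * \<bar>X j \<omega> - Y \<omega>\<bar>))" for j
    by (rule integrable_const_bound[where B=2]) (use \<eta>m R in auto)
  have "\<eta> \<longlonglongrightarrow> (\<integral>\<omega>. 0 \<partial>M)"
    unfolding \<eta>_def
  proof (rule integral_dominated_convergence[where w="\<lambda>_. 2"])
    show "AE x in M. (\<lambda>i. min 2 (R * \<bar>X i x - Y x\<bar>)) \<longlonglongrightarrow> 0"
    proof (rule AE_mp[OF lim], intro AE_I2 impI)
      fix x assume "(\<lambda>j. X j x) \<longlonglongrightarrow> Y x"
      then have "(\<lambda>i. min 2 (R * \<bar>X i x - Y x\<bar>)) \<longlonglongrightarrow> min 2 (R * \<bar>Y x - Y x\<bar>)"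
        by (intro tendsto_intros)
      then show "(\<lambda>i. min 2 (R * \<bar>X i x - Y x\<bar>)) \<longlonglongrightarrow> 0" by simp
    qed
    show "AE x in M. norm (min 2 (R * \<bar>X i x - Y x\<bar>)) \<le> 2" for i
      using R by (intro AE_I2) auto
  qed (use \<eta>m in auto)
  then have lim0: "\<eta> \<longlonglongrightarrow> 0" by simp
  have bound: "norm (cfx M (X j) a - cfx M Y a) \<le> \<eta> j" if a: "Re a \<le> 0" "norm a \<le> R" for j a
  proof -
    let ?f = "\<lambda>\<omega>. exp (a * complex_of_real (max 0 (X j \<omega>)))"
    let ?g = "\<lambda>\<omega>. exp (a * complex_of_real (max 0 (Y \<omega>)))"
    have fi: "integrable M ?f" by (rule cfx_int[OF Xm a(1)])
    have gi: "integrable M ?g" by (rule cfx_int[OF Y a(1)])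
    have pw: "norm (?f \<omega> - ?g \<omega>) \<le> min 2 (R * \<bar>X j \<omega> - Y \<omega>\<bar>)" for \<omega>
    proof -
      have "norm (?f \<omega> - ?g \<omega>) \<le> norm (?f \<omega>) + norm (?g \<omega>)" by (rule norm_triangle_ineq4)
      also have "\<dots> \<le> 1 + 1" using a by (intro add_mono norm_exp_pos) auto
      finally have b2: "norm (?f \<omega> - ?g \<omega>) \<le> 2" by simp
      have "norm (?f \<omega> - ?g \<omega>) \<le> norm a * \<bar>max 0 (X j \<omega>) - max 0 (Y \<omega>)\<bar>"
        by (rule exp_lipschitz) (use a in auto)
      also have "\<dots> \<le> R * \<bar>X j \<omega> - Y \<omega>\<bar>"
        using a R by (intro mult_mono) (auto simp: max_def)
      finally show ?thesis using b2 by simp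
    qed
    have "norm (cfx M (X j) a - cfx M Y a) = norm (\<integral>\<omega>. ?f \<omega> - ?g \<omega> \<partial>M)"
      unfolding cfx_def using fi gi by simp
    also have "\<dots> \<le> (\<integral>\<omega>. norm (?f \<omega> - ?g \<omega>) \<partial>M)" by (rule integral_norm_bound)
    also have "\<dots> \<le> \<eta> j" unfolding \<eta>_def
      by (rule integral_mono) (use fi gi \<eta>int pw in auto)
    finally show ?thesis .
  qed
  show ?thesis using lim0 bound by blast
qed

end

lemma root_unity_Gcd:
  fixes \<zeta> :: complex and S :: "nat set"
  assumes "\<And>D. D \<in> S \<Longrightarrow> \<zeta> ^ D = 1"
  shows "\<zeta> ^ Gcd S = 1"
proof (cases "S \<subseteq> {0}")
  case True
  then have "Gcd S = 0" by (simp add: Gcd_0_iff)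
  then show ?thesis by (metis power_0)
next
  case False
  then obtain D0 where D0: "D0 \<in> S" "D0 > 0" by auto
  define g where "g = (LEAST n. 0 < n \<and> \<zeta> ^ n = 1)"
  have ex: "0 < D0 \<and> \<zeta> ^ D0 = 1" using D0 assms by auto
  have g: "0 < g" "\<zeta> ^ g = 1" using LeastI[of "\<lambda>n. 0 < n \<and> \<zeta> ^ n = 1", OF ex] by (auto simp: g_def)
  have gmin: "\<And>n. 0 < n \<Longrightarrow> \<zeta> ^ n = 1 \<Longrightarrow> g \<le> n" unfolding g_def by (rule Least_le) simp
  have "g dvd D" if "D \<in> S" for D
  proof -
    have "\<zeta> ^ D = \<zeta> ^ (g * (D div g) + D mod g)" by simp
    also have "\<dots> = (\<zeta> ^ g) ^ (D div g) * \<zeta> ^ (D mod g)" by (simp only: power_add power_mult)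
    finally have "\<zeta> ^ D = (\<zeta> ^ g) ^ (D div g) * \<zeta> ^ (D mod g)" .
    then have r: "\<zeta> ^ (D mod g) = 1" using assms[OF that] g by simp
    have "D mod g < g" using g by simp
    then have "D mod g = 0"
    proof (rule contrapos_pp)
      assume "D mod g \<noteq> 0"
      then have "g \<le> D mod g" using gmin[of "D mod g"] r by simp
      then show "\<not> D mod g < g" by simp
    qed
    then show ?thesis by (simp add: dvd_eq_mod_eq_0)
  qed
  then have "g dvd Gcd S" by (simp add: Gcd_greatest)
  then obtain k where "Gcd S = g * k" by (auto simp: dvd_def)
  then show ?thesis using g by (simp add: power_mult)
qed

lemma exp_i_ne_1:
  fixes x :: real
  assumes "0 < \<bar>x\<bar>" "\<bar>x\<bar> \<le> pi"
  shows "exp (\<i> * complex_of_real x) \<noteq> 1"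
proof
  assume "exp (\<i> * complex_of_real x) = 1"
  then obtain n :: int where n: "x = of_int (2 * n) * pi" by (auto simp: exp_eq_1)
  show False
  proof (cases "n = 0")
    case True then show False using n assms by simp
  next
    case False
    then have "1 \<le> \<bar>real_of_int n\<bar>" by linarith
    then have "2 * pi \<le> \<bar>x\<bar>" using n pi_gt_zero by (simp add: abs_mult)
    then show False using assms pi_gt_zero by linarith
  qed
qed

lemma (in prob_space) W_im_lt1:
  assumes W: "W \<in> borel_measurable M"
    and W_ac: "\<And>A. A \<in> sets borel \<Longrightarrow> A \<subseteq> {0<..} \<Longrightarrow> emeasure lborel A = 0 \<Longrightarrow>
                 emeasure M (W -` A \<inter> space M) = 0"
    and nz: "\<not> (AE \<omega> in M. W \<omega> \<le> 0)" and a: "Re a = 0" "Im a \<noteq> 0"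
  shows "norm (cfx M W a) < 1"
proof (rule ccontr)
  assume "\<not> ?thesis"
  then have n1: "norm (cfx M W a) = 1" using cfx_norm_le[OF W, of a] a by simp
  define c where "c = cfx M W a"
  have ae: "AE \<omega> in M. exp (a * complex_of_real (max 0 (W \<omega>))) = c"
    unfolding c_def cfx_def
    by (rule norm1_imp_const[OF cfx_int[OF W] _ n1[unfolded cfx_def]]) (use a in \<open>auto intro: norm_exp_pos\<close>)
  define S where "S = {x. 0 < x \<and> exp (a * complex_of_real x) = c}"
  have ia: "a = \<i> * complex_of_real (Im a)" using a by (simp add: complex_eq_iff)
  have "countable S"
  proof (cases "S = {}")
    case False
    then obtain x0 where x0: "x0 \<in> S" by auto
    have "S \<subseteq> range (\<lambda>n::int. x0 + 2 * pi * of_int n / Im a)"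
    proof
      fix x assume x: "x \<in> S"
      have "exp (a * complex_of_real x) = exp (a * complex_of_real x0)" using x x0 by (simp add: S_def)
      then have "exp (a * complex_of_real x - a * complex_of_real x0) = 1" by (simp add: exp_diff)
      then obtain n :: int where "Im (a * complex_of_real x - a * complex_of_real x0) = of_int (2 * n) * pi"
        by (auto simp: exp_eq_1)
      then have "Im a * (x - x0) = 2 * pi * of_int n" by (simp add: algebra_simps)
      then have "x = x0 + 2 * pi * of_int n / Im a" using a(2) by (simp add: field_simps)
      then show "x \<in> range (\<lambda>n::int. x0 + 2 * pi * of_int n / Im a)" by blast
    qed
    then show ?thesis by (rule countable_subset) simp
  qed simp
  then have Snull: "S \<in> null_sets lborel" by (rule countable_imp_null_set_lborel)
  then have Sb: "S \<in> sets borel" and Se: "emeasure lborel S = 0" by (auto simp: null_sets_def)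
  have "emeasure M (W -` S \<inter> space M) = 0" by (rule W_ac[OF Sb _ Se]) (auto simp: S_def)
  moreover have "W -` S \<inter> space M \<in> sets M" using measurable_sets[OF W Sb] .
  ultimately have "W -` S \<inter> space M \<in> null_sets M" by (simp add: null_sets_def)
  then have nS: "AE \<omega> in M. \<omega> \<notin> W -` S \<inter> space M" by (rule AE_not_in)
  have "AE \<omega> in M. W \<omega> \<le> 0"
  proof (rule AE_mp[OF AE_conj_iff[THEN iffD2, OF conjI[OF ae nS]]], intro AE_I2 impI)
    fix \<omega> assume \<omega>: "\<omega> \<in> space M"
      and h: "exp (a * complex_of_real (max 0 (W \<omega>))) = c \<and> \<omega> \<notin> W -` S \<inter> space M"
    show "W \<omega> \<le> 0"
    proof (rule ccontr)
      assume "\<not> W \<omega> \<le> 0"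
      then have "W \<omega> \<in> S" using h by (simp add: S_def max_def)
      then show False using h \<omega> by auto
    qed
  qed
  with nz show False by simp
qed


lemma pmf_im_lt1:
  fixes P :: "nat pmf"
  assumes d: "span_d (pmf P) > 0" and a: "Re a = 0" "0 < \<bar>Im a\<bar>" "\<bar>Im a\<bar> \<le> pi / real (span_d (pmf P))"
  shows "norm (cfx (measure_pmf P) real a) < 1"
proof (rule ccontr)
  assume "\<not> ?thesis"
  then have n1: "norm (cfx (measure_pmf P) real a) = 1"
    using measure_pmf.cfx_norm_le[of real P a] a by simp
  have ae: "AE j in measure_pmf P. exp (a * complex_of_real (max 0 (real j))) = cfx (measure_pmf P) real a"
    unfolding cfx_def
    by (rule measure_pmf.norm1_imp_const[OF measure_pmf.cfx_int _ n1[unfolded cfx_def]]) (use a in \<open>auto intro: norm_exp_pos\<close>)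
  define \<zeta> where "\<zeta> = exp a"
  have \<zeta>0: "\<zeta> \<noteq> 0" by (simp add: \<zeta>_def)
  have supp: "\<zeta> ^ j = cfx (measure_pmf P) real a" if "pmf P j > 0" for j
  proof -
    have "j \<in> set_pmf P" using that by (simp add: set_pmf_iff)
    then have "exp (a * complex_of_real (max 0 (real j))) = cfx (measure_pmf P) real a"
      using ae by (simp add: AE_measure_pmf_iff)
    moreover have "exp (a * complex_of_real (max 0 (real j))) = \<zeta> ^ j"
      by (simp add: \<zeta>_def exp_of_nat_mult[symmetric] mult.commute)
    ultimately show ?thesis by simp
  qed
  have "\<zeta> ^ D = 1" if Dmem: "D \<in> {j - l | j l. l < j \<and> pmf P j * pmf P l > 0}" for D
  proof -
    obtain j l where jl: "D = j - l" "l < j" "pmf P j * pmf P l > 0" using Dmem by blast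
    have pj: "pmf P j > 0" and pl: "pmf P l > 0"
      using jl(3) pmf_nonneg[of P j] pmf_nonneg[of P l] by (auto simp: zero_less_mult_iff)
    have "\<zeta> ^ D * \<zeta> ^ l = \<zeta> ^ j" using jl by (simp add: power_add[symmetric])
    then have "\<zeta> ^ D * \<zeta> ^ l = \<zeta> ^ l" using supp[OF pj] supp[OF pl] by simp
    then show ?thesis using \<zeta>0 by simp
  qed
  then have "\<zeta> ^ span_d (pmf P) = 1" unfolding span_d_def by (rule root_unity_Gcd)
  then have e1: "exp (of_nat (span_d (pmf P)) * a) = 1" by (simp add: \<zeta>_def exp_of_nat_mult)
  have ia: "a = \<i> * complex_of_real (Im a)" using a by (simp add: complex_eq_iff)
  have "of_nat (span_d (pmf P)) * a = \<i> * complex_of_real (Im a * real (span_d (pmf P)))"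
    by (subst ia) (simp add: algebra_simps)
  with e1 have e2: "exp (\<i> * complex_of_real (Im a * real (span_d (pmf P)))) = 1" by simp
  have "0 < \<bar>Im a * real (span_d (pmf P))\<bar>" using a d by (simp add: abs_mult)
  moreover have "\<bar>Im a * real (span_d (pmf P))\<bar> \<le> pi"
    using a d by (simp add: abs_mult field_simps)
  ultimately show False using exp_i_ne_1 e2 by blast
qed

context prob_space
begin

lemma cfx_neg1:
  assumes Y: "Y \<in> borel_measurable M"
  shows "norm (cfx M Y (-1)) = (\<integral>\<omega>. exp (Re (-1) * max 0 (Y \<omega>)) \<partial>M)"
proof -
  have "cfx M Y (-1) = (\<integral>\<omega>. complex_of_real (exp (Re (-1) * max 0 (Y \<omega>))) \<partial>M)"
    unfolding cfx_def by (intro Bochner_Integration.integral_cong refl) (simp add: exp_of_real[symmetric])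
  also have "\<dots> = complex_of_real (\<integral>\<omega>. exp (Re (-1) * max 0 (Y \<omega>)) \<partial>M)" by simp
  finally show ?thesis by (simp add: integral_nonneg_AE)
qed

lemma big_regime:
  assumes Xm: "\<And>j. X j \<in> borel_measurable M" and W: "W \<in> borel_measurable M"
    and lim: "AE \<omega> in M. (\<lambda>j. X j \<omega>) \<longlonglongrightarrow> W \<omega>"
    and nz: "\<not> (AE \<omega> in M. W \<omega> \<le> 0)"
    and im: "\<And>a. Re a = 0 \<Longrightarrow> lo \<le> \<bar>Im a\<bar> \<Longrightarrow> \<bar>Im a\<bar> \<le> hi \<Longrightarrow> norm (cfx M W a) < 1"
    and lo: "0 < lo" "lo \<le> hi"
  shows "\<exists>J0 \<theta>. \<theta> < 1 \<and> (\<forall>j\<ge>J0. \<forall>a. Re a \<le> 0 \<longrightarrow> lo \<le> \<bar>Im a\<bar> \<longrightarrow> \<bar>Im a\<bar> \<le> hi \<longrightarrow> norm (cfx M (X j) a) \<le> \<theta>)"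
proof -
  obtain \<theta>W where \<theta>W: "\<theta>W < 1" and bW: "\<And>a. Re a \<le> 0 \<Longrightarrow> lo \<le> \<bar>Im a\<bar> \<Longrightarrow> \<bar>Im a\<bar> \<le> hi \<Longrightarrow> norm (cfx M W a) \<le> \<theta>W"
    using cfx_band_bound[OF W nz lo im] by blast
  have \<phi>: "norm (cfx M W (-1)) < 1" by (rule cfx_lt1_neg'[OF W nz]) simp
  define \<theta>' where "\<theta>' = max \<theta>W (norm (cfx M W (-1)))"
  have \<theta>': "\<theta>' < 1" using \<theta>W \<phi> by (simp add: \<theta>'_def)
  have le1: "\<theta>W \<le> \<theta>'" and le2: "norm (cfx M W (-1)) \<le> \<theta>'" by (auto simp: \<theta>'_def)
  define R where "R = 1 + hi"
  have R: "0 \<le> R" using lo by (simp add: R_def)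
  obtain \<eta> where \<eta>: "\<eta> \<longlonglongrightarrow> 0"
    and b\<eta>: "\<And>j a. Re a \<le> 0 \<Longrightarrow> norm a \<le> R \<Longrightarrow> norm (cfx M (X j) a - cfx M W a) \<le> \<eta> j"
    using cfx_unif[OF Xm W lim R] by blast
  have "\<forall>\<^sub>F j in sequentially. \<eta> j < (1 - \<theta>') / 2"
    using order_tendstoD(2)[OF \<eta>, of "(1 - \<theta>') / 2"] \<theta>' by simp
  then obtain J0 where J0: "\<And>j. J0 \<le> j \<Longrightarrow> \<eta> j < (1 - \<theta>') / 2"
    by (auto simp: eventually_sequentially)
  define \<theta> where "\<theta> = \<theta>' + (1 - \<theta>') / 2"
  have "\<theta> < 1" using \<theta>' unfolding \<theta>_def by (simp add: field_simps)
  moreover have "norm (cfx M (X j) a) \<le> \<theta>"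
    if j: "J0 \<le> j" and a: "Re a \<le> 0" "lo \<le> \<bar>Im a\<bar>" "\<bar>Im a\<bar> \<le> hi" for j a
  proof (cases "-1 \<le> Re a")
    case True
    have "norm a \<le> \<bar>Re a\<bar> + \<bar>Im a\<bar>" by (rule cmod_le)
    also have "\<dots> \<le> R" using True a by (simp add: R_def)
    finally have aR: "norm a \<le> R" .
    have "norm (cfx M (X j) a) \<le> norm (cfx M W a) + norm (cfx M (X j) a - cfx M W a)"
      by (rule norm_triangle_sub)
    also have "\<dots> \<le> \<theta>W + \<eta> j" by (intro add_mono bW b\<eta> a aR)
    also have "\<dots> \<le> \<theta>" using J0[OF j] le1 le2 unfolding \<theta>_def by linarith
    finally show ?thesis .
  next
    case False
    have "norm (cfx M (X j) a) \<le> (\<integral>\<omega>. exp (Re a * max 0 (X j \<omega>)) \<partial>M)"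
      by (rule cfx_norm_le_re[OF Xm a(1)])
    also have "\<dots> \<le> (\<integral>\<omega>. exp (Re (-1) * max 0 (X j \<omega>)) \<partial>M)"
      using False by (intro cfx_mono_re[OF Xm]) auto
    also have "\<dots> = norm (cfx M (X j) (-1))" by (rule cfx_neg1[OF Xm, symmetric])
    also have "\<dots> \<le> norm (cfx M W (-1)) + norm (cfx M (X j) (-1) - cfx M W (-1))"
      by (rule norm_triangle_sub)
    also have "\<dots> \<le> norm (cfx M W (-1)) + \<eta> j" using lo by (intro add_mono b\<eta>) (auto simp: R_def)
    also have "\<dots> \<le> \<theta>" using J0[OF j] le1 le2 unfolding \<theta>_def by linarith
    finally show ?thesis .
  qed
  ultimately show ?thesis by blast
qed

end

theorem mainTheorem4:
  fixes P :: "nat pmf" and M :: "'a measure" and \<xi> :: "nat \<Rightarrow> nat \<Rightarrow> 'a \<Rightarrow> nat"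
    and W :: "'a \<Rightarrow> real" and c :: "nat \<Rightarrow> real" and L :: "real \<Rightarrow> real" and m :: real
  defines "p \<equiv> pmf P"
  assumes nondeg: "\<And>j. p j \<noteq> 1"
    and mean_fin: "summable (\<lambda>j. p j * real j)"
    and m_def: "m = (\<Sum>j. p j * real j)"
    and m_gt1: "m > 1"
    and p0: "p 0 = 0"
    and M: "prob_space M"
    and xi_indep: "prob_space.indep_vars M (\<lambda>_. count_space UNIV) (\<lambda>(n, k). \<xi> n k) UNIV"
    and xi_distr: "\<And>n k. distr M (count_space UNIV) (\<xi> n k) = measure_pmf P"
    and c_pos: "\<And>n. c n > 0"
    and c0: "c 0 = 1"
    and c_incr: "\<And>n. c n < c (Suc n)"
    and c_le: "\<And>n. c (Suc n) \<le> m * c n"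
    and L_sv: "slowly_varying L"
    and c_L: "\<And>n. c n = m ^ n * L (m ^ n)"
    and c_LlogL: "summable (\<lambda>j. p j * real j * ln (real j)) \<Longrightarrow> (\<forall>n. c n = m ^ n)"
    and W_meas: "W \<in> borel_measurable M"
    and W_lim: "AE \<omega> in M. (\<lambda>n. real (GW \<xi> n \<omega>) / c n) \<longlonglongrightarrow> W \<omega>"
    and W_nondeg: "\<not> (\<exists>a. AE \<omega> in M. W \<omega> = a)"
    and W_ac: "\<And>A. A \<in> sets borel \<Longrightarrow> A \<subseteq> {0<..} \<Longrightarrow> emeasure lborel A = 0 \<Longrightarrow>
                 emeasure M (W -` A \<inter> space M) = 0"
  shows "\<exists>A::real. \<exists>\<theta>::real. A > 0 \<and> 0 < \<theta> \<and> \<theta> < 1 \<and>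
    (\<forall>n j. \<forall>h::real. \<forall>t::real. 1 \<le> n \<longrightarrow> 1 \<le> j \<longrightarrow> j \<le> n \<longrightarrow> 0 \<le> h \<longrightarrow>
        pi / (real (span_d p) * c j) \<le> \<bar>t\<bar> \<longrightarrow> \<bar>t\<bar> \<le> pi / (real (span_d p) * c (j - 1)) \<longrightarrow>
      (let z = (gf p ^^ n) (exp (complex_of_real (- h / c n) + \<i> * complex_of_real t)) in
        (p 0 + p 1 > 0 \<longrightarrow> cmod z \<le> A * p 1 ^ (n - j + 1)) \<and>
        cmod z \<le> \<theta> ^ (min_mu p ^ (n - j + 1))))"
proof -
  interpret prob_space M by (rule M)
  have pnn: "\<And>j. 0 \<le> p j" by (simp add: p_def)
  obtain j0 where "j0 \<in> set_pmf P" using set_pmf_not_empty[of P] by blast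
  then have pj0: "p j0 > 0" by (simp add: p_def set_pmf_iff pmf_positive)
  define \<mu> where "\<mu> = min_mu p"
  have pmu: "p \<mu> > 0" unfolding \<mu>_def min_mu_def by (rule LeastI[of _ j0]) (rule pj0)
  have mu_le: "\<And>j. p j > 0 \<Longrightarrow> \<mu> \<le> j" unfolding \<mu>_def min_mu_def by (rule Least_le)
  have mu1: "1 \<le> \<mu>" using pmu p0 by (cases \<mu>) auto
  have "\<exists>k. k \<noteq> \<mu> \<and> p k > 0"
  proof (rule ccontr)
    assume "\<nexists>k. k \<noteq> \<mu> \<and> p k > 0"
    then have "set_pmf P \<subseteq> {\<mu>}" by (auto simp: p_def set_pmf_iff dest: pmf_positive)
    then have "P = return_pmf \<mu>" by (simp add: set_pmf_subset_singleton)
    then have "p \<mu> = 1" by (simp add: p_def)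
    with nondeg show False by blast
  qed
  then obtain k where k: "k \<noteq> \<mu>" "p k > 0" by blast
  have kmu: "\<mu> < k" using mu_le[OF k(2)] k(1) by simp
  define d where "d = span_d p"
  have d0: "d > 0"
  proof -
    define S where "S = {j - l | j l. l < j \<and> p j * p l > 0}"
    have "p k * p \<mu> > 0" using k pmu by simp
    then have "\<exists>j l. k - \<mu> = j - l \<and> l < j \<and> p j * p l > 0" using kmu by blast
    then have kS: "k - \<mu> \<in> S" unfolding S_def by simp
    have "Gcd S \<noteq> 0"
    proof
      assume "Gcd S = 0"
      then have "S \<subseteq> {0}" by simp
      with kS kmu show False by auto
    qed
    then show ?thesis unfolding d_def span_d_def S_def[symmetric] by (simp only: neq0_conv)
  qed
  have c_mono: "\<And>i j. i \<le> j \<Longrightarrow> c i \<le> c j"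
    by (rule lift_Suc_mono_le) (use c_incr less_imp_le in auto)
  have c_ge1: "\<And>j. 1 \<le> c j" using c_mono[of 0] c0 by simp
  define X :: "nat \<times> nat \<Rightarrow> 'a \<Rightarrow> nat" where "X = (\<lambda>(n, k). \<xi> n k)"
  have ind: "indep_vars (\<lambda>_. count_space UNIV) X UNIV" using xi_indep by (simp add: X_def)
  have Xm: "\<And>i. X i \<in> measurable M (count_space UNIV)"
    using ind unfolding indep_vars_def by blast
  have fX: "(\<integral>\<omega>. w ^ X i \<omega> \<partial>M) = gf p w" if w: "norm w \<le> 1" for i w
  proof -
    obtain a b where i: "i = (a, b)" by (cases i)
    have xm: "\<xi> a b \<in> measurable M (count_space UNIV)" using Xm[of i] by (simp add: i X_def)
    have "(\<integral>\<omega>. w ^ X i \<omega> \<partial>M) = (\<integral>\<omega>. w ^ \<xi> a b \<omega> \<partial>M)" by (simp add: i X_def)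
    also have "\<dots> = (\<integral>x. w ^ x \<partial>distr M (count_space UNIV) (\<xi> a b))"
      by (rule integral_distr[symmetric, OF xm]) simp
    also have "\<dots> = (\<integral>x. w ^ x \<partial>measure_pmf P)" by (simp add: xi_distr)
    also have "\<dots> = gf p w" unfolding p_def by (rule gf_integral[OF w, symmetric])
    finally show ?thesis .
  qed
  have fb: "norm (gf p w) \<le> 1" if w: "norm w \<le> 1" for w
    using gf_norm_le[OF w, of P] pgfr_le1[of "norm w" P] w by (simp add: p_def)
  have GWX: "GW \<xi> n \<omega> = GWf n (\<lambda>i. X i \<omega>)" for n \<omega>
  proof -
    have "(\<lambda>(i, k). \<xi> i k \<omega>) = (\<lambda>i. X i \<omega>)" by (auto simp: X_def)
    then show ?thesis by (simp add: GW_GWf)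
  qed
  have pgfZ: "(\<integral>\<omega>. w ^ GW \<xi> n \<omega> \<partial>M) = (gf p ^^ n) w" if w: "norm w \<le> 1" for n w
    unfolding GWX by (rule GW_pgf[OF ind fX fb w])
  have Zm: "(\<lambda>\<omega>. GW \<xi> n \<omega>) \<in> measurable M (count_space UNIV)" for n
    unfolding GWX by (rule GWf_rv[OF Xm])
  have W0: "AE \<omega> in M. 0 \<le> W \<omega>"
    using W_lim
  proof eventually_elim
    fix \<omega> assume "(\<lambda>n. real (GW \<xi> n \<omega>) / c n) \<longlonglongrightarrow> W \<omega>"
    then show "0 \<le> W \<omega>"
      by (rule LIMSEQ_le_const) (use c_pos in \<open>auto intro!: exI[of _ 0] divide_nonneg_pos\<close>)
  qed
  have nz: "\<not> (AE \<omega> in M. W \<omega> \<le> 0)"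
  proof
    assume "AE \<omega> in M. W \<omega> \<le> 0"
    with W0 have "AE \<omega> in M. W \<omega> = 0" by eventually_elim simp
    with W_nondeg show False by blast
  qed
  define Xr where "Xr j \<omega> = real (GW \<xi> j \<omega>) / c j" for j \<omega>
  have Xrm: "Xr j \<in> borel_measurable M" for j
  proof -
    from measurable_compose[OF Zm[of j] borel_measurable_count_space[of "\<lambda>N. real N / c j"]]
    show ?thesis by (simp add: Xr_def[abs_def])
  qed
  have Xlim: "AE \<omega> in M. (\<lambda>j. Xr j \<omega>) \<longlonglongrightarrow> W \<omega>" using W_lim by (simp add: Xr_def)
  define lo where "lo = pi / real d"
  define hi where "hi = m * pi / real d"
  have lo: "0 < lo" "lo \<le> hi" using d0 m_gt1 by (auto simp: lo_def hi_def divide_right_mono)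
  have imW: "norm (cfx M W a) < 1" if "Re a = 0" "lo \<le> \<bar>Im a\<bar>" "\<bar>Im a\<bar> \<le> hi" for a
    using that lo by (intro W_im_lt1[OF W_meas W_ac nz]) auto
  obtain J0 \<theta>b where \<theta>b: "\<theta>b < 1" and bigb: "\<And>j a. J0 \<le> j \<Longrightarrow> Re a \<le> 0 \<Longrightarrow> lo \<le> \<bar>Im a\<bar> \<Longrightarrow> \<bar>Im a\<bar> \<le> hi \<Longrightarrow> norm (cfx M (Xr j) a) \<le> \<theta>b"
    using big_regime[OF Xrm W_meas Xlim nz imW lo] by blast
  define \<delta> where "\<delta> = pi / (real d * c J0)"
  have \<delta>: "0 < \<delta>" "\<delta> \<le> lo"
  proof -
    show "0 < \<delta>" using d0 c_pos[of J0] by (simp add: \<delta>_def)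
    have "real d * 1 \<le> real d * c J0" using c_ge1[of J0] by (intro mult_left_mono) auto
    then show "\<delta> \<le> lo" unfolding \<delta>_def lo_def using d0
      by (intro divide_left_mono) auto
  qed
  have nzP: "\<not> (AE j in measure_pmf P. real j \<le> 0)"
  proof
    assume "AE j in measure_pmf P. real j \<le> 0"
    then have "real \<mu> \<le> 0" using pmu by (auto simp: AE_measure_pmf_iff set_pmf_iff p_def)
    with mu1 show False by simp
  qed
  have imP: "norm (cfx (measure_pmf P) real a) < 1" if "Re a = 0" "\<delta> \<le> \<bar>Im a\<bar>" "\<bar>Im a\<bar> \<le> lo" for a
  proof (rule pmf_im_lt1)
    show "0 < span_d (pmf P)" using d0 by (simp add: d_def p_def)
    show "\<bar>Im a\<bar> \<le> pi / real (span_d (pmf P))" using that by (simp add: lo_def d_def p_def)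
  qed (use that \<delta> in auto)
  obtain \<theta>s where \<theta>s: "\<theta>s < 1" and smallb: "\<And>a. Re a \<le> 0 \<Longrightarrow> \<delta> \<le> \<bar>Im a\<bar> \<Longrightarrow> \<bar>Im a\<bar> \<le> lo \<Longrightarrow> norm (cfx (measure_pmf P) real a) \<le> \<theta>s"
    using measure_pmf.cfx_band_bound[of real P, OF _ nzP \<delta> imP] by auto
  have KB: "norm ((gf p ^^ j) (exp (complex_of_real (- h / c n) + \<i> * complex_of_real t))) \<le> max \<theta>b \<theta>s"
    if j: "1 \<le> j" "j \<le> n" and h: "0 \<le> h"
      and t: "pi / (real d * c j) \<le> \<bar>t\<bar>" "\<bar>t\<bar> \<le> pi / (real d * c (j - 1))" for n j h t
  proof -
    define b where "b = complex_of_real (- h / c n) + \<i> * complex_of_real t"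
    have Reb: "Re b \<le> 0" using h c_pos[of n] by (simp add: b_def)
    have Imb: "Im b = t" by (simp add: b_def)
    have nw: "norm (exp b) \<le> 1" using Reb by simp
    have cj1: "c j \<le> m * c (j - 1)" using c_le[of "j - 1"] j by simp
    show ?thesis
    proof (cases "J0 \<le> j")
      case True
      define a where "a = complex_of_real (c j) * b"
      have "(gf p ^^ j) (exp b) = (\<integral>\<omega>. exp b ^ GW \<xi> j \<omega> \<partial>M)" by (rule pgfZ[OF nw, symmetric])
      also have "\<dots> = cfx M (Xr j) a"
        unfolding cfx_def
      proof (rule Bochner_Integration.integral_cong[OF refl])
        fix \<omega>
        have cj: "c j > 0" by (rule c_pos)
        have "a * complex_of_real (max 0 (Xr j \<omega>)) = complex_of_real (c j) * b * (of_nat (GW \<xi> j \<omega>) / complex_of_real (c j))"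
          using cj by (simp add: a_def Xr_def)
        also have "\<dots> = of_nat (GW \<xi> j \<omega>) * b" using cj by (simp add: field_simps)
        finally show "exp b ^ GW \<xi> j \<omega> = exp (a * complex_of_real (max 0 (Xr j \<omega>)))"
          by (simp add: exp_of_nat_mult)
      qed
      finally have eq: "(gf p ^^ j) (exp b) = cfx M (Xr j) a" .
      have Rea: "Re a \<le> 0" using Reb c_pos[of j] by (simp add: a_def mult_nonneg_nonpos)
      have Ima: "\<bar>Im a\<bar> = c j * \<bar>t\<bar>" using c_pos[of j] by (simp add: a_def Imb abs_mult)
      have "lo \<le> \<bar>Im a\<bar>"
      proof -
        have "lo = c j * (pi / (real d * c j))" using c_pos[of j] by (simp add: lo_def)
        also have "\<dots> \<le> c j * \<bar>t\<bar>" using t(1) c_pos[of j] by (intro mult_left_mono) auto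
        finally show ?thesis using Ima by simp
      qed
      moreover have "\<bar>Im a\<bar> \<le> hi"
      proof -
        have "c j * \<bar>t\<bar> \<le> (m * c (j - 1)) * (pi / (real d * c (j - 1)))"
          using t(2) cj1 c_pos[of j] by (intro mult_mono) auto
        also have "\<dots> = hi" using c_pos[of "j - 1"] d0 by (simp add: hi_def)
        finally show ?thesis using Ima by simp
      qed
      ultimately have "norm (cfx M (Xr j) a) \<le> \<theta>b" using bigb[OF True Rea] by blast
      then show ?thesis using eq by (simp add: b_def)
    next
      case False
      have gfeq: "gf p (exp b) = cfx (measure_pmf P) real b"
        unfolding p_def gf_integral[OF nw] cfx_def
        by (rule Bochner_Integration.integral_cong[OF refl]) (simp add: exp_of_nat_mult[symmetric] mult.commute)
      have ng: "norm (gf p (exp b)) \<le> 1" by (rule fb[OF nw])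
      have jeq: "j = Suc (j - 1)" using j by simp
      have "(gf p ^^ j) (exp b) = (gf p ^^ (j - 1)) (gf p (exp b))"
        by (subst jeq) (simp only: funpow_Suc_right comp_def)
      then have "norm ((gf p ^^ j) (exp b)) \<le> (pgfr P ^^ (j - 1)) (norm (gf p (exp b)))"
        using gf_iter_bound[where w="gf p (exp b)" and x="norm (gf p (exp b))" and P=P and N="j - 1"] ng by (simp add: p_def)
      also have "\<dots> \<le> norm (gf p (exp b)) ^ (\<mu> ^ (j - 1))"
        by (rule pgfr_iter_pow) (use mu_le ng in \<open>auto simp: p_def\<close>)
      also have "\<dots> \<le> norm (gf p (exp b)) ^ 1"
        using ng mu1 by (intro power_decreasing) auto
      also have "\<dots> = norm (cfx (measure_pmf P) real b)" by (simp add: gfeq)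
      also have "\<dots> \<le> \<theta>s"
      proof (rule smallb[OF Reb])
        have "real d * c j \<le> real d * c J0" using False c_mono[of j J0] by (intro mult_left_mono) auto
        then have "\<delta> \<le> pi / (real d * c j)" unfolding \<delta>_def using d0 c_pos[of j]
          by (intro divide_left_mono) auto
        then show "\<delta> \<le> \<bar>Im b\<bar>" using t(1) Imb by simp
        have "real d * 1 \<le> real d * c (j - 1)" using c_ge1[of "j - 1"] by (intro mult_left_mono) auto
        then have "pi / (real d * c (j - 1)) \<le> lo" unfolding lo_def using d0
          by (intro divide_left_mono) auto
        then show "\<bar>Im b\<bar> \<le> lo" using t(2) Imb by simp
      qed
      finally show ?thesis by (simp add: b_def)
    qed
  qed
  define \<theta>1 where "\<theta>1 = max (max \<theta>b \<theta>s) (1/2)"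
  have \<theta>1: "1/2 \<le> \<theta>1" "\<theta>1 < 1" using \<theta>b \<theta>s by (auto simp: \<theta>1_def)
  define \<theta> where "\<theta> = root \<mu> \<theta>1"
  have mu0: "0 < \<mu>" using mu1 by simp
  have \<theta>: "0 < \<theta>" "\<theta> < 1" "\<theta> ^ \<mu> = \<theta>1"
    using \<theta>1 mu0 by (auto simp: \<theta>_def intro: real_root_gt_zero)
  have p1le: "p 1 < 1"
  proof -
    have "p 1 \<le> 1" by (simp add: p_def pmf_le_1)
    then show ?thesis using nondeg[of 1] by simp
  qed
  obtain A where A: "A > 0" and Ab: "\<And>N. p 1 > 0 \<Longrightarrow> (pgfr P ^^ N) \<theta>1 \<le> A * p 1 ^ Suc N"
  proof (cases "p 1 > 0")
    case True
    have g: "0 \<le> pgfr P y \<and> pgfr P y \<le> p 1 * y + (1 - p 1) * y\<^sup>2" if "0 \<le> y" "y \<le> 1" for y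
      using pgfr_nonneg[OF that(1)] pgfr_le_schroeder[of P y] p0 that by (simp add: p_def)
    obtain C where C: "C > 0" "\<And>N. (pgfr P ^^ N) \<theta>1 \<le> C * p 1 ^ N"
      using schroeder_iter[OF True p1le g, of \<theta>1] \<theta>1 by auto
    show ?thesis
    proof (rule that[of "C / p 1"])
      show "C / p 1 > 0" using C True by simp
      fix N show "(pgfr P ^^ N) \<theta>1 \<le> C / p 1 * p 1 ^ Suc N" using C(2)[of N] True by simp
    qed
  next
    case False
    then show ?thesis using that[of 1] by simp
  qed
  have main: "(\<forall>n j. \<forall>h::real. \<forall>t::real. 1 \<le> n \<longrightarrow> 1 \<le> j \<longrightarrow> j \<le> n \<longrightarrow> 0 \<le> h \<longrightarrow>
        pi / (real (span_d p) * c j) \<le> \<bar>t\<bar> \<longrightarrow> \<bar>t\<bar> \<le> pi / (real (span_d p) * c (j - 1)) \<longrightarrow>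
      (let z = (gf p ^^ n) (exp (complex_of_real (- h / c n) + \<i> * complex_of_real t)) in
        (p 0 + p 1 > 0 \<longrightarrow> cmod z \<le> A * p 1 ^ (n - j + 1)) \<and>
        cmod z \<le> \<theta> ^ (min_mu p ^ (n - j + 1))))"
  proof (intro allI impI)
    fix n j :: nat and h t :: real
    assume n: "1 \<le> n" and j: "1 \<le> j" "j \<le> n" and h: "0 \<le> h"
      and t1: "pi / (real (span_d p) * c j) \<le> \<bar>t\<bar>" and t2: "\<bar>t\<bar> \<le> pi / (real (span_d p) * c (j - 1))"
    define w where "w = exp (complex_of_real (- h / c n) + \<i> * complex_of_real t)"
    have v: "norm ((gf p ^^ j) w) \<le> \<theta>1"
      using KB[OF j h t1[folded d_def] t2[folded d_def]] by (simp add: w_def \<theta>1_def)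
    have neq: "n = (n - j) + j" using j by simp
    have "(gf p ^^ n) w = (gf p ^^ (n - j)) ((gf p ^^ j) w)"
      by (subst neq) (simp only: funpow_add comp_def)
    then have zb: "norm ((gf p ^^ n) w) \<le> (pgfr P ^^ (n - j)) \<theta>1"
      using gf_iter_bound[where w="(gf p ^^ j) w" and x=\<theta>1 and P=P and N="n - j"] v \<theta>1 by (simp add: p_def)
    have ex: "n - j + 1 = Suc (n - j)" by simp
    have part2: "norm ((gf p ^^ n) w) \<le> \<theta> ^ (min_mu p ^ (n - j + 1))"
    proof -
      have "(pgfr P ^^ (n - j)) \<theta>1 \<le> \<theta>1 ^ (\<mu> ^ (n - j))"
        by (rule pgfr_iter_pow) (use mu_le \<theta>1 in \<open>auto simp: p_def\<close>)
      also have "\<dots> = \<theta> ^ (\<mu> ^ (n - j + 1))"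
        unfolding ex by (simp add: \<theta>(3)[symmetric] power_mult[symmetric])
      finally show ?thesis using zb by (simp add: \<mu>_def)
    qed
    have part1: "norm ((gf p ^^ n) w) \<le> A * p 1 ^ (n - j + 1)" if "p 0 + p 1 > 0"
    proof -
      have "p 1 > 0" using that p0 by simp
      then show ?thesis using zb Ab[of "n - j"] ex by simp
    qed
    show "let z = (gf p ^^ n) (exp (complex_of_real (- h / c n) + \<i> * complex_of_real t)) in
        (p 0 + p 1 > 0 \<longrightarrow> cmod z \<le> A * p 1 ^ (n - j + 1)) \<and>
        cmod z \<le> \<theta> ^ (min_mu p ^ (n - j + 1))"
      using part1 part2 by (simp add: w_def Let_def)
  qed
  show ?thesis using A \<theta> main by blast
qed

end
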